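(* Let $\mathcal{S}$ be a concurrent game structure with state set $St$, $A\subseteq Ag$, $\varphi'$ an rATL state formula, $s\in St$ and $t\in\mathbb{B}_4$. For $u\in\mathbb{B}_4$ let $\mathrm{Sat}(\varphi',u)=\{s'\in St\mid V(s',\varphi')\succeq u\}$. Then: (a) $V(s,\langle\!\langle A\rangle\!\rangle\dot\bigcirc\varphi')\succeq t$ iff Player 1 has a winning strategy for $(\mathcal{S}_A,\mathrm{Next}(\mathrm{Sat}(\varphi',t)))$ from $s$; (b) $V(s,\langle\!\langle A\rangle\!\rangle\dot\Diamond\varphi')\succeq t$ iff Player 1 has a winning strategy for $(\mathcal{S}_A,\mathrm{Reach}(\mathrm{Sat}(\varphi',t)))$ from $s$; (c) $V(s,\langle\!\langle A\rangle\!\rangle\dot\Box\varphi')\succeq 1111$ iff Player 1 wins $(\mathcal{S}_A,\mathrm{Safety}(\mathrm{Sat}(\varphi',1111)))$ from $s$; (d) $V(s,\langle\!\langle A\rangle\!\rangle\dot\Box\varphi')\succeq 0111$ iff Player 1 wins $(\mathcal{S}_A,\mathrm{coB\ddot uchi}(\mathrm{Sat}(\varphi',0111)))$ from $s$; (e) $V(s,\langle\!\langle A\rangle\!\rangle\dot\Box\varphi')\succeq 0011$ iff Player 1 wins $(\mathcal{S}_A,\mathrm{B\ddot uchi}(\mathrm{Sat}(\varphi',0011)))$ from $s$; (f) $V(s,\langle\!\langle A\rangle\!\rangle\dot\Box\varphi')\succeq 0001$ iff Player 1 wins $(\mathcal{S}_A,\mathrm{Reach}(\mathrm{Sat}(\varphi',0001)))$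 from $s$; (g) $V(s,[\![A]\!]\dot\bigcirc\varphi')\succeq t$ iff Player 1 does not have a winning strategy for $(\mathcal{S}_A,\mathrm{Next}(St\setminus\mathrm{Sat}(\varphi',t)))$ from $s$.
   Context: Fix a finite set $\mathrm{AP}$ of atomic propositions. A concurrent game structure (CGS) is a tuple $\mathcal{S}=(St,Ag,Ac,\delta,\ell)$ where $St$ is a finite set of states, $Ag$ a finite set of agents, $Ac$ a finite set of actions, $\ell:St\to 2^{\mathrm{AP}}$ a labeling, and $\delta:St\times AV\to St$ a transition function, where $AV$ is the set of action vectors for $Ag$ (an action vector for $A\subseteq Ag$ is a map $A\to Ac$). A state $s'$ is a successor of $s$ if $s'=\delta(s,v)$ for some $v\in AV$. A path is an infinite sequence $\pi=s_0s_1s_2\cdots$ of states with $s_{n+1}$ a successor of $s_n$ for all $n$; write $\pi[n]=s_n$. A strategy for an agent is a function $f:St^+\to Ac$. For $A\subseteq Ag$ and a set $F_A=\{f_a\mid a\in A\}$ of strategies, one for each agent in $A$, $out(s,F_A)$ is the set of paths $s_0s_1\cdots$ with $s_0=s$ such that for every $n\ge 0$ there is $v\in AV$ with $v(a)=f_a(s_0\cdots s_n)$ for all $a\in A$ and $s_{n+1}=\delta(s_n,v)$. $\mathbb{B}_4=\{1111,0111,0011,0001,0000\}$ is totally ordered by $1111\succ0111\succ0011\succ0001\succ0000$; for $b=b_1b_2b_3b_4\in\mathbb{B}_4$ and $k\in\{1,2,3,4\}$, $b[k]=b_k$; max and min on $\mathbb{B}_4$ refer to this order, and on bits to $0<1$.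 rATL formulas: state formulas $\varphi ::= p \mid \neg\varphi\mid\varphi\vee\varphi\mid\varphi\wedge\varphi\mid\varphi\to\varphi\mid\langle\!\langle A\rangle\!\rangle\Phi\mid[\![A]\!]\Phi$ and path formulas $\Phi::=\dot{\bigcirc}\varphi\mid\dot\Diamond\varphi\mid\dot\Box\varphi$, with $p\in\mathrm{AP}$ and $A\subseteq Ag$; an rATL formula is a state formula. On a CGS the valuation $V$ maps (state, state formula) and (path, path formula) pairs to $\mathbb{B}_4$: $V(s,p)=1111$ if $p\in\ell(s)$ and $0000$ otherwise; $V(s,\varphi_1\vee\varphi_2)=\max(V(s,\varphi_1),V(s,\varphi_2))$; $V(s,\varphi_1\wedge\varphi_2)=\min(V(s,\varphi_1),V(s,\varphi_2))$; $V(s,\neg\varphi)=0000$ if $V(s,\varphi)=1111$ and $1111$ otherwise; $V(s,\varphi_1\to\varphi_2)=1111$ if $V(s,\varphi_1)\preceq V(s,\varphi_2)$ and $V(s,\varphi_2)$ otherwise; $V(s,\langle\!\langle A\rangle\!\rangle\Phi)$ is the maximal $b\in\mathbb{B}_4$ such that there is a set $F_A$ of strategies (one per agent in $A$) with $V(\pi,\Phi)\succeq b$ for all $\pi\in out(s,F_A)$; $V(s,[\![A]\!]\Phi)$ is the maximal $b\in\mathbb{B}_4$ such that for every such $F_A$ there is $\pi\in out(s,F_A)$ with $V(\pi,\Phi)\succeq b$. For paths: $V(\pi,\dot\bigcirc\varphi)[k]=V(\pi[1],\varphi)[k]$; $V(\pi,\dot\Diamond\varphi)[k]=\max_{i\ge0}V(\pi[i],\varphi)[k]$;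 $V(\pi,\dot\Box\varphi)=b_1b_2b_3b_4$ with $b_1=\min_{i\ge0}V(\pi[i],\varphi)[1]$, $b_2=\max_{i\ge0}\min_{j\ge i}V(\pi[j],\varphi)[2]$, $b_3=\min_{i\ge0}\max_{j\ge i}V(\pi[j],\varphi)[3]$, $b_4=\max_{i\ge0}V(\pi[i],\varphi)[4]$. Two-player games: a game structure $(St,St_1,St_2,Ac_1,Ac_2,\delta)$ with $St=St_1\uplus St_2$ and $\delta:(St_1\times Ac_1)\cup(St_2\times Ac_2)\to St$; a Player 1 strategy is $f:St^*St_1\to Ac_1$; outcomes of $f$ from $s$ are paths starting in $s$ following $\delta$ and using $f$ at Player 1 states; $f$ is winning for $\mathrm{Win}\subseteq St^\omega$ from $s$ if all its outcomes from $s$ lie in $\mathrm{Win}$. $\mathcal{S}_A=(St\cup(St\times Ac_1),St,St\times Ac_1,Ac_1,Ac_2,\delta')$ where $Ac_1$ (resp. $Ac_2$) is the set of action vectors for $A$ (resp. $Ag\setminus A$), $\delta'(s,v)=(s,v)$, $\delta'((s,v),v')=\delta(s,v\oplus v')$ with $v\oplus v'$ the combined action vector for $Ag$. For $F\subseteq St$, as subsets of $(St\cdot(St\times Ac_1))^\omega$ with paths $s_0s_1s_2\cdots$: $\mathrm{Next}(F)$: $s_2\in F$; $\mathrm{Reach}(F)$: $s_n\in F$ for some even $n$; $\mathrm{Safety}(F)$: $s_n\in F$ for all even $n$; $\mathrm{B\ddot uchi}(F)$: $s_n\in F$ for infinitely many even $n$; $\mathrm{coB\ddot uchi}(F)$: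 $s_n\in F$ for all but finitely many even $n$. *)

theory Defs
  imports "HOL-Library.FuncSet"
begin

datatype b4 = B1111 | B0111 | B0011 | B0001 | B0000

fun b4_rank :: "b4 \<Rightarrow> nat" where
  "b4_rank B0000 = 0" | "b4_rank B0001 = 1" | "b4_rank B0011 = 2"
| "b4_rank B0111 = 3" | "b4_rank B1111 = 4"

lemma b4_rank_inj: "b4_rank x = b4_rank y \<Longrightarrow> x = y"
  by (cases x; cases y) auto

instantiation b4 :: linorder
begin
definition less_eq_b4 :: "b4 \<Rightarrow> b4 \<Rightarrow> bool" where
  "less_eq_b4 x y \<longleftrightarrow> b4_rank x \<le> b4_rank y"
definition less_b4 :: "b4 \<Rightarrow> b4 \<Rightarrow> bool" where
  "less_b4 x y \<longleftrightarrow> b4_rank x < b4_rank y"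
instance
  by standard (auto simp: less_eq_b4_def less_b4_def intro: b4_rank_inj)
end

fun b4_bit :: "b4 \<Rightarrow> nat \<Rightarrow> bool" where
  "b4_bit B1111 k = (k \<in> {1,2,3,4})"
| "b4_bit B0111 k = (k \<in> {2,3,4})"
| "b4_bit B0011 k = (k \<in> {3,4})"
| "b4_bit B0001 k = (k \<in> {4})"
| "b4_bit B0000 k = False"

definition b4_of_bits :: "(nat \<Rightarrow> bool) \<Rightarrow> b4" where
  "b4_of_bits f = (THE b. \<forall>k\<in>{1,2,3,4::nat}. b4_bit b k = f k)"

record ('s, 'ag, 'ac, 'p) cgs =
  cSt :: "'s set"
  cAg :: "'ag set"
  cAc :: "'ac set"
  cdelta :: "'s \<Rightarrow> ('ag \<Rightarrow> 'ac) \<Rightarrow> 's"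
  clab :: "'s \<Rightarrow> 'p set"

definition actvecs :: "('s, 'ag, 'ac, 'p) cgs \<Rightarrow> 'ag set \<Rightarrow> ('ag \<Rightarrow> 'ac) set" where
  "actvecs G A = (A \<rightarrow>\<^sub>E cAc G)"

definition cgs_wf :: "('s, 'ag, 'ac, 'p) cgs \<Rightarrow> bool" where
  "cgs_wf G \<longleftrightarrow> finite (cSt G) \<and> finite (cAg G) \<and> finite (cAc G) \<and> cAc G \<noteq> {}
     \<and> (\<forall>q\<in>cSt G. \<forall>v\<in>actvecs G (cAg G). cdelta G q v \<in> cSt G)"

definition strats :: "('s, 'ag, 'ac, 'p) cgs \<Rightarrow> 'ag set \<Rightarrow> ('ag \<Rightarrow> 's list \<Rightarrow> 'ac) \<Rightarrow> bool" where
  "strats G A F \<longleftrightarrow> (\<forall>a\<in>A. \<forall>h. h \<noteq> [] \<and> set h \<subseteq> cSt G \<longrightarrow> F a h \<in> cAc G)"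

definition out :: "('s, 'ag, 'ac, 'p) cgs \<Rightarrow> 's \<Rightarrow> 'ag set \<Rightarrow> ('ag \<Rightarrow> 's list \<Rightarrow> 'ac)
    \<Rightarrow> (nat \<Rightarrow> 's) set" where
  "out G s A F = {\<pi>. \<pi> 0 = s \<and> (\<forall>n. \<exists>v\<in>actvecs G (cAg G).
      (\<forall>a\<in>A. v a = F a (map \<pi> [0..<Suc n])) \<and> \<pi> (Suc n) = cdelta G (\<pi> n) v)}"

datatype ('p, 'ag) sform =
    Prop 'p
  | Neg "('p, 'ag) sform"
  | Or "('p, 'ag) sform" "('p, 'ag) sform"
  | And "('p, 'ag) sform" "('p, 'ag) sform"
  | Imp "('p, 'ag) sform" "('p, 'ag) sform"
  | Ex "'ag set" "('p, 'ag) pform"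
  | All "'ag set" "('p, 'ag) pform"
and ('p, 'ag) pform =
    Nxt "('p, 'ag) sform"
  | Ev "('p, 'ag) sform"
  | Alw "('p, 'ag) sform"

primrec sf_wf :: "'ag set \<Rightarrow> ('p, 'ag) sform \<Rightarrow> bool"
  and pf_wf :: "'ag set \<Rightarrow> ('p, 'ag) pform \<Rightarrow> bool" where
  "sf_wf Ag (Prop p) = True"
| "sf_wf Ag (Neg \<phi>) = sf_wf Ag \<phi>"
| "sf_wf Ag (Or \<phi> \<psi>) = (sf_wf Ag \<phi> \<and> sf_wf Ag \<psi>)"
| "sf_wf Ag (And \<phi> \<psi>) = (sf_wf Ag \<phi> \<and> sf_wf Ag \<psi>)"
| "sf_wf Ag (Imp \<phi> \<psi>) = (sf_wf Ag \<phi> \<and> sf_wf Ag \<psi>)"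
| "sf_wf Ag (Ex A \<Phi>) = (A \<subseteq> Ag \<and> pf_wf Ag \<Phi>)"
| "sf_wf Ag (All A \<Phi>) = (A \<subseteq> Ag \<and> pf_wf Ag \<Phi>)"
| "pf_wf Ag (Nxt \<phi>) = sf_wf Ag \<phi>"
| "pf_wf Ag (Ev \<phi>) = sf_wf Ag \<phi>"
| "pf_wf Ag (Alw \<phi>) = sf_wf Ag \<phi>"

primrec Vs :: "('s, 'ag, 'ac, 'p) cgs \<Rightarrow> 's \<Rightarrow> ('p, 'ag) sform \<Rightarrow> b4"
  and Vp :: "('s, 'ag, 'ac, 'p) cgs \<Rightarrow> (nat \<Rightarrow> 's) \<Rightarrow> ('p, 'ag) pform \<Rightarrow> b4" where
  "Vs G s (Prop p) = (if p \<in> clab G s then B1111 else B0000)"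
| "Vs G s (Neg \<phi>) = (if Vs G s \<phi> = B1111 then B0000 else B1111)"
| "Vs G s (Or \<phi> \<psi>) = max (Vs G s \<phi>) (Vs G s \<psi>)"
| "Vs G s (And \<phi> \<psi>) = min (Vs G s \<phi>) (Vs G s \<psi>)"
| "Vs G s (Imp \<phi> \<psi>) = (if Vs G s \<phi> \<le> Vs G s \<psi> then B1111 else Vs G s \<psi>)"
| "Vs G s (Ex A \<Phi>) = (GREATEST b. \<exists>F. strats G A F \<and> (\<forall>\<pi>\<in>out G s A F. Vp G \<pi> \<Phi> \<ge> b))"
| "Vs G s (All A \<Phi>) = (GREATEST b. \<forall>F. strats G A F \<longrightarrow> (\<exists>\<pi>\<in>out G s A F. Vp G \<pi> \<Phi> \<ge> b))"
| "Vp G \<pi> (Nxt \<phi>) = b4_of_bits (\<lambda>k. b4_bit (Vs G (\<pi> 1) \<phi>) k)"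
| "Vp G \<pi> (Ev \<phi>) = b4_of_bits (\<lambda>k. \<exists>i. b4_bit (Vs G (\<pi> i) \<phi>) k)"
| "Vp G \<pi> (Alw \<phi>) = b4_of_bits (\<lambda>k.
      if k = 1 then (\<forall>i. b4_bit (Vs G (\<pi> i) \<phi>) 1)
      else if k = 2 then (\<exists>i. \<forall>j\<ge>i. b4_bit (Vs G (\<pi> j) \<phi>) 2)
      else if k = 3 then (\<forall>i. \<exists>j\<ge>i. b4_bit (Vs G (\<pi> j) \<phi>) 3)
      else (\<exists>i. b4_bit (Vs G (\<pi> i) \<phi>) 4))"

definition Sat :: "('s, 'ag, 'ac, 'p) cgs \<Rightarrow> ('p, 'ag) sform \<Rightarrow> b4 \<Rightarrow> 's set" where
  "Sat G \<phi> u = {s'\<in>cSt G. Vs G s' \<phi> \<ge> u}"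

text \<open>Game states: Inl s for s in St (Player 1), Inr (s, v) for (s, v) in St x Ac_1 (Player 2).\<close>
type_synonym ('s, 'ag, 'ac) gstate = "'s + ('s \<times> ('ag \<Rightarrow> 'ac))"

definition gstates :: "('s, 'ag, 'ac, 'p) cgs \<Rightarrow> 'ag set \<Rightarrow> ('s, 'ag, 'ac) gstate set" where
  "gstates G A = Inl ` cSt G \<union> Inr ` (cSt G \<times> actvecs G A)"

definition merge :: "'ag set \<Rightarrow> ('ag \<Rightarrow> 'ac) \<Rightarrow> ('ag \<Rightarrow> 'ac) \<Rightarrow> ('ag \<Rightarrow> 'ac)" where
  "merge A v v' = (\<lambda>a. if a \<in> A then v a else v' a)"

definition p1strat :: "('s, 'ag, 'ac, 'p) cgs \<Rightarrow> 'ag set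
    \<Rightarrow> (('s, 'ag, 'ac) gstate list \<Rightarrow> ('ag \<Rightarrow> 'ac)) \<Rightarrow> bool" where
  "p1strat G A f \<longleftrightarrow> (\<forall>h. h \<noteq> [] \<and> set h \<subseteq> gstates G A \<and> last h \<in> Inl ` cSt G
      \<longrightarrow> f h \<in> actvecs G A)"

definition outcomes :: "('s, 'ag, 'ac, 'p) cgs \<Rightarrow> 'ag set \<Rightarrow> 's
    \<Rightarrow> (('s, 'ag, 'ac) gstate list \<Rightarrow> ('ag \<Rightarrow> 'ac)) \<Rightarrow> (nat \<Rightarrow> ('s, 'ag, 'ac) gstate) set" where
  "outcomes G A s f = {\<rho>. \<rho> 0 = Inl s \<and> (\<forall>n. case \<rho> n of
       Inl q \<Rightarrow> \<rho> (Suc n) = Inr (q, f (map \<rho> [0..<Suc n]))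
     | Inr (q, v) \<Rightarrow> (\<exists>v'\<in>actvecs G (cAg G - A).
          \<rho> (Suc n) = Inl (cdelta G q (merge A v v'))))}"

definition p1wins :: "('s, 'ag, 'ac, 'p) cgs \<Rightarrow> 'ag set
    \<Rightarrow> (nat \<Rightarrow> ('s, 'ag, 'ac) gstate) set \<Rightarrow> 's \<Rightarrow> bool" where
  "p1wins G A Win s \<longleftrightarrow> (\<exists>f. p1strat G A f \<and> (\<forall>\<rho>\<in>outcomes G A s f. \<rho> \<in> Win))"

definition NextW :: "'s set \<Rightarrow> (nat \<Rightarrow> ('s, 'ag, 'ac) gstate) set" where
  "NextW F = {\<rho>. \<rho> 2 \<in> Inl ` F}"
definition ReachW :: "'s set \<Rightarrow> (nat \<Rightarrow> ('s, 'ag, 'ac) gstate) set" where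
  "ReachW F = {\<rho>. \<exists>n. even n \<and> \<rho> n \<in> Inl ` F}"
definition SafetyW :: "'s set \<Rightarrow> (nat \<Rightarrow> ('s, 'ag, 'ac) gstate) set" where
  "SafetyW F = {\<rho>. \<forall>n. even n \<longrightarrow> \<rho> n \<in> Inl ` F}"
definition BuchiW :: "'s set \<Rightarrow> (nat \<Rightarrow> ('s, 'ag, 'ac) gstate) set" where
  "BuchiW F = {\<rho>. \<forall>N. \<exists>n\<ge>N. even n \<and> \<rho> n \<in> Inl ` F}"
definition coBuchiW :: "'s set \<Rightarrow> (nat \<Rightarrow> ('s, 'ag, 'ac) gstate) set" where
  "coBuchiW F = {\<rho>. \<exists>N. \<forall>n\<ge>N. even n \<longrightarrow> \<rho> n \<in> Inl ` F}"

end

theory Submission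
  imports Defs
begin

section \<open>B4 lemmas\<close>

lemma finite_b4: "finite (UNIV :: b4 set)"
proof -
  have "UNIV = {B1111,B0111,B0011,B0001,B0000}"
    by (auto, case_tac x, auto)
  then show ?thesis by (metis finite.emptyI finite.insertI)
qed

lemma greatest_b4:
  assumes "P B0000" "\<And>x y. P y \<Longrightarrow> x \<le> y \<Longrightarrow> P x"
  shows "(t::b4) \<le> Greatest P \<longleftrightarrow> P t"
proof -
  let ?M = "Max {x. P x}"
  have fin: "finite {x. P x}" using finite_b4 by (rule finite_subset[rotated]) simp
  have ne: "{x. P x} \<noteq> {}" using assms(1) by blast
  have PM: "P ?M" using Max_in[OF fin ne] by simp
  have ge: "\<And>y. P y \<Longrightarrow> y \<le> ?M" by (rule Max_ge[OF fin]) simp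
  have G: "Greatest P = ?M" by (rule Greatest_equality[of P ?M, OF PM ge])
  show ?thesis
  proof
    assume "t \<le> Greatest P" then show "P t" using assms(2)[OF PM] G by simp
  next
    assume "P t" then show "t \<le> Greatest P" using ge G by simp
  qed
qed

lemma bits_inj: "\<forall>k\<in>{1,2,3,4::nat}. b4_bit c k = b4_bit d k \<Longrightarrow> c = d"
  by (cases c; cases d) auto

lemma of_bits:
  assumes "f 1 \<Longrightarrow> f 2" "f 2 \<Longrightarrow> f 3" "f 3 \<Longrightarrow> f 4"
  shows "\<forall>k\<in>{1,2,3,4::nat}. b4_bit (b4_of_bits f) k = f k"
proof -
  define b where "b = (if f 1 then B1111 else if f 2 then B0111 else if f 3 then B0011
     else if f 4 then B0001 else B0000)"
  have hb: "\<forall>k\<in>{1,2,3,4::nat}. b4_bit b k = f k" using assms unfolding b_def by auto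
  have "b4_of_bits f = b" unfolding b4_of_bits_def
  proof (rule the_equality)
    show "\<forall>k\<in>{1,2,3,4::nat}. b4_bit b k = f k" by (rule hb)
  next
    fix c assume "\<forall>k\<in>{1,2,3,4::nat}. b4_bit c k = f k"
    with hb show "c = b" by (intro bits_inj) auto
  qed
  with hb show ?thesis by simp
qed

lemma bit_mono: "b4_bit b 1 \<Longrightarrow> b4_bit b 2" "b4_bit b 2 \<Longrightarrow> b4_bit b 3"
  "b4_bit b 3 \<Longrightarrow> b4_bit b 4"
  by (cases b; simp)+

lemma le_first: "B1111 \<le> b \<longleftrightarrow> b4_bit b 1" "B0111 \<le> b \<longleftrightarrow> b4_bit b 2"
  "B0011 \<le> b \<longleftrightarrow> b4_bit b 3" "B0001 \<le> b \<longleftrightarrow> b4_bit b 4" "B0000 \<le> b"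
  by (cases b; simp add: less_eq_b4_def)+

lemma of_bits_self: "b4_of_bits (b4_bit x) = x"
proof -
  have "\<forall>k\<in>{1,2,3,4::nat}. b4_bit (b4_of_bits (b4_bit x)) k = b4_bit x k"
    by (rule of_bits[of "b4_bit x"]) (simp_all add: bit_mono)
  then show ?thesis by (intro bits_inj) simp
qed

lemma Vp_Nxt: "Vp G \<pi> (Nxt \<phi>) = Vs G (\<pi> 1) \<phi>"
  by (simp add: of_bits_self)

lemma Vp_Ev: "t \<le> Vp G \<pi> (Ev \<phi>) \<longleftrightarrow> (\<exists>i. t \<le> Vs G (\<pi> i) \<phi>)"
proof -
  define f where "f = (\<lambda>k. \<exists>i. b4_bit (Vs G (\<pi> i) \<phi>) k)"
  have e: "Vp G \<pi> (Ev \<phi>) = b4_of_bits f" unfolding f_def by simp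
  have h: "\<forall>k\<in>{1,2,3,4::nat}. b4_bit (Vp G \<pi> (Ev \<phi>)) k = f k"
    unfolding e by (rule of_bits; unfold f_def; meson bit_mono)
  show ?thesis using h by (cases t) (auto simp: le_first f_def intro: bit_mono)
qed

lemma Vp_Alw:
  "B1111 \<le> Vp G \<pi> (Alw \<phi>) \<longleftrightarrow> (\<forall>i. B1111 \<le> Vs G (\<pi> i) \<phi>)"
  "B0111 \<le> Vp G \<pi> (Alw \<phi>) \<longleftrightarrow> (\<exists>i. \<forall>j\<ge>i. B0111 \<le> Vs G (\<pi> j) \<phi>)"
  "B0011 \<le> Vp G \<pi> (Alw \<phi>) \<longleftrightarrow> (\<forall>i. \<exists>j\<ge>i. B0011 \<le> Vs G (\<pi> j) \<phi>)"
  "B0001 \<le> Vp G \<pi> (Alw \<phi>) \<longleftrightarrow> (\<exists>i. B0001 \<le> Vs G (\<pi> i) \<phi>)"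
proof -
  let ?b = "\<lambda>i. Vs G (\<pi> i) \<phi>"
  define f where "f = (\<lambda>k::nat.
      if k = 1 then (\<forall>i. b4_bit (?b i) 1)
      else if k = 2 then (\<exists>i. \<forall>j\<ge>i. b4_bit (?b j) 2)
      else if k = 3 then (\<forall>i. \<exists>j\<ge>i. b4_bit (?b j) 3)
      else (\<exists>i. b4_bit (?b i) 4))"
  have e: "Vp G \<pi> (Alw \<phi>) = b4_of_bits f" unfolding f_def by simp
  have m1: "f 1 \<Longrightarrow> f 2" unfolding f_def by (auto intro!: exI[of _ 0] bit_mono(1))
  have m2: "f 2 \<Longrightarrow> f 3" unfolding f_def
  proof simp
    assume "\<exists>i. \<forall>j\<ge>i. b4_bit (?b j) 2"
    then obtain i0 where "\<forall>j\<ge>i0. b4_bit (?b j) 2" by blast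
    then show "\<forall>i. \<exists>j\<ge>i. b4_bit (?b j) 3"
      by (metis bit_mono(2) max.cobounded1 max.cobounded2)
  qed
  have m3: "f 3 \<Longrightarrow> f 4" unfolding f_def by simp (meson bit_mono(3) le0)
  have h: "\<forall>k\<in>{1,2,3,4::nat}. b4_bit (Vp G \<pi> (Alw \<phi>)) k = f k"
    unfolding e by (rule of_bits[OF m1 m2 m3])
  show "B1111 \<le> Vp G \<pi> (Alw \<phi>) \<longleftrightarrow> (\<forall>i. B1111 \<le> Vs G (\<pi> i) \<phi>)"
    using h by (simp add: le_first f_def)
  show "B0111 \<le> Vp G \<pi> (Alw \<phi>) \<longleftrightarrow> (\<exists>i. \<forall>j\<ge>i. B0111 \<le> Vs G (\<pi> j) \<phi>)"
    using h by (simp add: le_first f_def)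
  show "B0011 \<le> Vp G \<pi> (Alw \<phi>) \<longleftrightarrow> (\<forall>i. \<exists>j\<ge>i. B0011 \<le> Vs G (\<pi> j) \<phi>)"
    using h by (simp add: le_first f_def)
  show "B0001 \<le> Vp G \<pi> (Alw \<phi>) \<longleftrightarrow> (\<exists>i. B0001 \<le> Vs G (\<pi> i) \<phi>)"
    using h by (simp add: le_first f_def)
qed

section \<open>CGS lemmas\<close>

lemma Vs_Ex:
  assumes "cgs_wf G"
  shows "t \<le> Vs G s (Ex A \<Phi>) \<longleftrightarrow> (\<exists>F. strats G A F \<and> (\<forall>\<pi>\<in>out G s A F. t \<le> Vp G \<pi> \<Phi>))"
proof -
  obtain c where c: "c \<in> cAc G" using assms unfolding cgs_wf_def by blast
  have "strats G A (\<lambda>a h. c)" using c unfolding strats_def by simp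
  then show ?thesis unfolding Vs.simps
    by (intro greatest_b4) (auto simp: le_first intro: order_trans)
qed

lemma out_St:
  assumes "cgs_wf G" "s \<in> cSt G" "\<pi> \<in> out G s A F"
  shows "\<pi> n \<in> cSt G"
proof (induction n)
  case 0 then show ?case using assms unfolding out_def by simp
next
  case (Suc n)
  from assms(3) obtain v where "v \<in> actvecs G (cAg G)" "\<pi> (Suc n) = cdelta G (\<pi> n) v"
    unfolding out_def by blast
  then show ?case using Suc assms(1) unfolding cgs_wf_def by simp
qed

lemma out_nonempty:
  assumes wf: "cgs_wf G" and AAg: "A \<subseteq> cAg G" and s: "s \<in> cSt G" and F: "strats G A F"
  shows "\<exists>\<pi>. \<pi> \<in> out G s A F"
proof -
  obtain c where c: "c \<in> cAc G" using wf unfolding cgs_wf_def by blast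
  define vec where "vec = (\<lambda>h a. if a \<in> A then F a h else if a \<in> cAg G then c else undefined)"
  define hist where "hist = rec_nat [s] (\<lambda>n h. h @ [cdelta G (last h) (vec h)])"
  define \<pi> where "\<pi> = (\<lambda>n. last (hist n))"
  have h0: "hist 0 = [s]" unfolding hist_def by simp
  have hS: "hist (Suc n) = hist n @ [cdelta G (last (hist n)) (vec (hist n))]" for n
    unfolding hist_def by simp
  have vec_in: "vec h \<in> actvecs G (cAg G)" if "h \<noteq> []" "set h \<subseteq> cSt G" for h
    using that F c AAg unfolding vec_def actvecs_def strats_def by auto
  have inv: "hist n = map \<pi> [0..<Suc n] \<and> set (hist n) \<subseteq> cSt G" for n
  proof (induction n)
    case 0 then show ?case using s h0 \<pi>_def by simp
  next
    case (Suc n)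
    have ne: "hist n \<noteq> []" using Suc by simp
    have "cdelta G (last (hist n)) (vec (hist n)) \<in> cSt G"
      using wf vec_in[OF ne] Suc ne unfolding cgs_wf_def by auto
    moreover have "\<pi> (Suc n) = cdelta G (last (hist n)) (vec (hist n))"
      unfolding \<pi>_def hS by simp
    moreover have "set (map \<pi> [0..<Suc n]) \<subseteq> cSt G" using Suc by metis
    ultimately show ?case using Suc by (simp add: hS)
  qed
  have "\<pi> \<in> out G s A F"
    unfolding out_def
  proof (safe)
    show "\<pi> 0 = s" unfolding \<pi>_def h0 by simp
  next
    fix n
    have ne: "hist n \<noteq> []" using inv[of n] by simp
    show "\<exists>v\<in>actvecs G (cAg G). (\<forall>a\<in>A. v a = F a (map \<pi> [0..<Suc n])) \<and>
               \<pi> (Suc n) = cdelta G (\<pi> n) v"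
      apply (rule bexI[of _ "vec (hist n)"])
      using inv[of n] vec_in[OF ne] unfolding vec_def \<pi>_def hS by auto
  qed
  then show ?thesis by blast
qed

lemma Vs_All:
  assumes "cgs_wf G" "A \<subseteq> cAg G" "s \<in> cSt G"
  shows "t \<le> Vs G s (All A \<Phi>) \<longleftrightarrow> (\<forall>F. strats G A F \<longrightarrow> (\<exists>\<pi>\<in>out G s A F. t \<le> Vp G \<pi> \<Phi>))"
  unfolding Vs.simps
  using out_nonempty[OF assms]
  apply (intro greatest_b4)
   apply (auto simp: le_first) [1]
  apply (meson order_trans)
  done

section \<open>Game lemmas\<close>

lemma merge_in:
  assumes "A \<subseteq> cAg G" "v \<in> actvecs G A" "v' \<in> actvecs G (cAg G - A)"
  shows "merge A v v' \<in> actvecs G (cAg G)"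
  using assms unfolding actvecs_def merge_def PiE_def extensional_def by auto

lemma outc_struct:
  assumes wf: "cgs_wf G" and AAg: "A \<subseteq> cAg G" and s: "s \<in> cSt G"
    and f: "p1strat G A f" and \<rho>: "\<rho> \<in> outcomes G A s f"
  shows "\<exists>q\<in>cSt G. \<rho> (2*n) = Inl q \<and> \<rho> (Suc (2*n)) = Inr (q, f (map \<rho> [0..<Suc (2*n)]))
     \<and> f (map \<rho> [0..<Suc (2*n)]) \<in> actvecs G A \<and> set (map \<rho> [0..<Suc (2*n)]) \<subseteq> gstates G A"
proof (induction n)
  case 0
  have r0: "\<rho> 0 = Inl s" using \<rho> unfolding outcomes_def by simp
  have c0: "case \<rho> 0 of Inl q \<Rightarrow> \<rho> (Suc 0) = Inr (q, f (map \<rho> [0..<Suc 0]))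
     | Inr (q, v) \<Rightarrow> (\<exists>v'\<in>actvecs G (cAg G - A). \<rho> (Suc 0) = Inl (cdelta G q (merge A v v')))"
    using \<rho> unfolding outcomes_def by blast
  have g: "set (map \<rho> [0..<Suc 0]) \<subseteq> gstates G A" using r0 s unfolding gstates_def by simp
  have "f (map \<rho> [0..<Suc 0]) \<in> actvecs G A"
    using f g r0 s unfolding p1strat_def by simp
  then show ?case using c0 r0 s g by simp
next
  case (Suc n)
  then obtain q where q: "q \<in> cSt G" "\<rho> (2*n) = Inl q"
    "\<rho> (Suc (2*n)) = Inr (q, f (map \<rho> [0..<Suc (2*n)]))"
    "f (map \<rho> [0..<Suc (2*n)]) \<in> actvecs G A" "set (map \<rho> [0..<Suc (2*n)]) \<subseteq> gstates G A"
    by blast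
  define v where "v = f (map \<rho> [0..<Suc (2*n)])"
  have c1: "case \<rho> (Suc (2*n)) of Inl q \<Rightarrow> \<rho> (Suc (Suc (2*n))) = Inr (q, f (map \<rho> [0..<Suc (Suc (2*n))]))
     | Inr (q, v) \<Rightarrow> (\<exists>v'\<in>actvecs G (cAg G - A). \<rho> (Suc (Suc (2*n))) = Inl (cdelta G q (merge A v v')))"
    using \<rho> unfolding outcomes_def by blast
  then obtain v' where v': "v' \<in> actvecs G (cAg G - A)"
    "\<rho> (Suc (Suc (2*n))) = Inl (cdelta G q (merge A v v'))"
    using q(3) unfolding v_def by auto
  define q' where "q' = cdelta G q (merge A v v')"
  have q'St: "q' \<in> cSt G" using wf merge_in[OF AAg q(4)[folded v_def] v'(1)] q(1)
    unfolding cgs_wf_def q'_def by blast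
  have e2: "2 * Suc n = Suc (Suc (2*n))" by simp
  have c2: "case \<rho> (2 * Suc n) of Inl q \<Rightarrow> \<rho> (Suc (2 * Suc n)) = Inr (q, f (map \<rho> [0..<Suc (2 * Suc n)]))
     | Inr (q, v) \<Rightarrow> (\<exists>v'\<in>actvecs G (cAg G - A). \<rho> (Suc (2 * Suc n)) = Inl (cdelta G q (merge A v v')))"
    using \<rho> unfolding outcomes_def by blast
  have r2: "\<rho> (2 * Suc n) = Inl q'" using v'(2) e2 q'_def by simp
  have hist: "map \<rho> [0..<Suc (2 * Suc n)] = map \<rho> [0..<Suc (2*n)] @ [Inr (q, v), Inl q']"
    using q(3) r2 e2 unfolding v_def by simp
  have g: "set (map \<rho> [0..<Suc (2 * Suc n)]) \<subseteq> gstates G A"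
    using hist q(5) q(1) q(4) q'St unfolding v_def gstates_def by auto
  have "f (map \<rho> [0..<Suc (2 * Suc n)]) \<in> actvecs G A"
    using f g hist q'St unfolding p1strat_def by simp
  then show ?case using c2 r2 q'St g by auto
qed

lemma dir1:
  assumes wf: "cgs_wf G" and AAg: "A \<subseteq> cAg G" and s: "s \<in> cSt G"
    and F: "strats G A F" and W: "\<forall>\<pi>\<in>out G s A F. W \<pi>"
  shows "\<exists>f. p1strat G A f \<and> (\<forall>\<rho>\<in>outcomes G A s f. W (\<lambda>n. projl (\<rho> (2*n))))"
proof -
  define f :: "('a, 'b, 'c) gstate list \<Rightarrow> 'b \<Rightarrow> 'c"
    where "f = (\<lambda>h. restrict (\<lambda>a. F a (map projl (filter isl h))) A)"
  have fs: "p1strat G A f" unfolding p1strat_def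
  proof (intro allI impI)
    fix h :: "('a, 'b, 'c) gstate list"
    assume h: "h \<noteq> [] \<and> set h \<subseteq> gstates G A \<and> last h \<in> Inl ` cSt G"
    have "last h \<in> set (filter isl h)" using h by auto
    then have ne: "map projl (filter isl h) \<noteq> []" by (metis empty_iff list.map_disc_iff list.set(1))
    have "set (map projl (filter isl h)) \<subseteq> cSt G"
      using h unfolding gstates_def by auto
    then show "f h \<in> actvecs G A"
      using F ne unfolding f_def actvecs_def strats_def by auto
  qed
  have "W (\<lambda>n. projl (\<rho> (2*n)))" if \<rho>: "\<rho> \<in> outcomes G A s f" for \<rho>
  proof -
    define \<pi> where "\<pi> = (\<lambda>n. projl (\<rho> (2*n)))"
    note st = outc_struct[OF wf AAg s fs \<rho>]
    have r2: "\<rho> (2*n) = Inl (\<pi> n)" for n using st[of n] unfolding \<pi>_def by auto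
    have r1: "\<rho> (Suc (2*n)) = Inr (\<pi> n, f (map \<rho> [0..<Suc (2*n)]))" for n
      using st[of n] unfolding \<pi>_def by auto
    have hs: "map projl (filter isl (map \<rho> [0..<Suc (2*n)])) = map \<pi> [0..<Suc n]" for n
    proof (induction n)
      case 0 then show ?case using r2[of 0] by simp
    next
      case (Suc n)
      have "map \<rho> [0..<Suc (2 * Suc n)] = map \<rho> [0..<Suc (2*n)] @ [\<rho> (Suc (2*n)), \<rho> (2 * Suc n)]"
        by simp
      then have "map projl (filter isl (map \<rho> [0..<Suc (2 * Suc n)]))
          = map projl (filter isl (map \<rho> [0..<Suc (2*n)])) @ [\<pi> (Suc n)]"
        using r1[of n] r2[of "Suc n"] by (simp del: upt_Suc)
      also have "\<dots> = map \<pi> [0..<Suc n] @ [\<pi> (Suc n)]" using Suc by (simp del: upt_Suc)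
      also have "\<dots> = map \<pi> [0..<Suc (Suc n)]" by simp
      finally show ?case .
    qed
    have "\<pi> \<in> out G s A F" unfolding out_def
    proof safe
      show "\<pi> 0 = s" using \<rho> unfolding outcomes_def \<pi>_def by simp
    next
      fix n
      define v where "v = f (map \<rho> [0..<Suc (2*n)])"
      have vA: "v \<in> actvecs G A" using st[of n] unfolding v_def by blast
      have c1: "case \<rho> (Suc (2*n)) of Inl q \<Rightarrow> \<rho> (Suc (Suc (2*n))) = Inr (q, f (map \<rho> [0..<Suc (Suc (2*n))]))
         | Inr (q, v) \<Rightarrow> (\<exists>v'\<in>actvecs G (cAg G - A). \<rho> (Suc (Suc (2*n))) = Inl (cdelta G q (merge A v v')))"
        using \<rho> unfolding outcomes_def by blast
      then obtain v' where v': "v' \<in> actvecs G (cAg G - A)"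
        "\<rho> (Suc (Suc (2*n))) = Inl (cdelta G (\<pi> n) (merge A v v'))"
        using r1[of n] unfolding v_def by auto
      have pS: "\<pi> (Suc n) = cdelta G (\<pi> n) (merge A v v')"
        using v'(2) unfolding \<pi>_def by simp
      have "\<forall>a\<in>A. merge A v v' a = F a (map \<pi> [0..<Suc n])"
        using hs[of n] unfolding merge_def v_def f_def by simp
      then show "\<exists>v\<in>actvecs G (cAg G). (\<forall>a\<in>A. v a = F a (map \<pi> [0..<Suc n])) \<and>
               \<pi> (Suc n) = cdelta G (\<pi> n) v"
        using merge_in[OF AAg vA v'(1)] pS by blast
    qed
    then show ?thesis using W unfolding \<pi>_def by blast
  qed
  then show ?thesis using fs by blast
qed

fun ghr :: "(('s, 'ag, 'ac) gstate list \<Rightarrow> ('ag \<Rightarrow> 'ac)) \<Rightarrow> 's list \<Rightarrow> ('s, 'ag, 'ac) gstate list" where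
  "ghr f [] = []"
| "ghr f [q] = [Inl q]"
| "ghr f (q # p # r) = ghr f (p # r) @ [Inr (p, f (ghr f (p # r))), Inl q]"

lemma ghr_props:
  "p1strat G A f \<Longrightarrow> r \<noteq> [] \<Longrightarrow> set r \<subseteq> cSt G \<Longrightarrow>
    ghr f r \<noteq> [] \<and> set (ghr f r) \<subseteq> gstates G A \<and> last (ghr f r) = Inl (hd r)"
proof (induction f r rule: ghr.induct)
  case (1 f) then show ?case by simp
next
  case (2 f q) then show ?case unfolding gstates_def by simp
next
  case (3 f q p r)
  then have IH: "ghr f (p # r) \<noteq> [] \<and> set (ghr f (p # r)) \<subseteq> gstates G A \<and> last (ghr f (p # r)) = Inl p"
    by simp
  have "f (ghr f (p # r)) \<in> actvecs G A"
    using "3.prems" IH unfolding p1strat_def by simp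
  then show ?case using IH "3.prems" unfolding gstates_def by auto
qed

lemma dir2:
  assumes f: "p1strat G A f" and W: "\<forall>\<rho>\<in>outcomes G A s f. W (\<lambda>n. projl (\<rho> (2*n)))"
  shows "\<exists>F. strats G A F \<and> (\<forall>\<pi>\<in>out G s A F. W \<pi>)"
proof -
  define F where "F = (\<lambda>a h. f (ghr f (rev h)) a)"
  have Fs: "strats G A F" unfolding strats_def
  proof (intro ballI allI impI)
    fix a h assume a: "a \<in> A" and h: "h \<noteq> [] \<and> set h \<subseteq> cSt G"
    have "ghr f (rev h) \<noteq> [] \<and> set (ghr f (rev h)) \<subseteq> gstates G A \<and> last (ghr f (rev h)) = Inl (hd (rev h))"
      using ghr_props[OF f, of "rev h"] h by simp
    moreover have "hd (rev h) \<in> cSt G" using h last_in_set[of h] by (auto simp: hd_rev)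
    ultimately have "f (ghr f (rev h)) \<in> actvecs G A" using f unfolding p1strat_def by simp
    then show "F a h \<in> cAc G" using a unfolding F_def actvecs_def by auto
  qed
  have "W \<pi>" if \<pi>: "\<pi> \<in> out G s A F" for \<pi>
  proof -
    define \<rho> where "\<rho> = (\<lambda>m. if even m then Inl (\<pi> (m div 2))
        else Inr (\<pi> (m div 2), f (ghr f (rev (map \<pi> [0..<Suc (m div 2)])))))"
    have r2: "\<rho> (2*n) = Inl (\<pi> n)" for n unfolding \<rho>_def by simp
    have r1: "\<rho> (Suc (2*n)) = Inr (\<pi> n, f (ghr f (rev (map \<pi> [0..<Suc n]))))" for n
      unfolding \<rho>_def by simp
    have key: "map \<rho> [0..<Suc (2*n)] = ghr f (rev (map \<pi> [0..<Suc n]))" for n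
    proof (induction n)
      case 0 then show ?case using r2[of 0] by simp
    next
      case (Suc n)
      have "map \<rho> [0..<Suc (2 * Suc n)] = map \<rho> [0..<Suc (2*n)] @ [\<rho> (Suc (2*n)), \<rho> (2 * Suc n)]"
        by simp
      moreover have "rev (map \<pi> [0..<Suc (Suc n)]) = \<pi> (Suc n) # \<pi> n # rev (map \<pi> [0..<n])"
        by simp
      moreover have "rev (map \<pi> [0..<Suc n]) = \<pi> n # rev (map \<pi> [0..<n])"
        by simp
      ultimately show ?case using Suc r1[of n] r2[of "Suc n"] by simp
    qed
    have "\<rho> \<in> outcomes G A s f" unfolding outcomes_def
    proof (safe)
      show "\<rho> 0 = Inl s" using \<pi> r2[of 0] unfolding out_def by simp
    next
      fix m
      consider n where "m = 2*n" | n where "m = Suc (2*n)" 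
      proof -
        have "m = 2*(m div 2) \<or> m = Suc (2*(m div 2))" by presburger
        then show ?thesis using that by blast
      qed
      then show "case \<rho> m of Inl q \<Rightarrow> \<rho> (Suc m) = Inr (q, f (map \<rho> [0..<Suc m]))
        | Inr (q, v) \<Rightarrow> (\<exists>v'\<in>actvecs G (cAg G - A). \<rho> (Suc m) = Inl (cdelta G q (merge A v v')))"
      proof cases
        case 1 then show ?thesis using r2[of n] r1[of n] key[of n] by simp
      next
        case 2
        from \<pi> obtain w where w: "w \<in> actvecs G (cAg G)"
          "\<forall>a\<in>A. w a = F a (map \<pi> [0..<Suc n])" "\<pi> (Suc n) = cdelta G (\<pi> n) w"
          unfolding out_def by blast
        define v where "v = f (ghr f (rev (map \<pi> [0..<Suc n])))"
        have mw: "merge A v (restrict w (cAg G - A)) = w"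
        proof
          fix a show "merge A v (restrict w (cAg G - A)) a = w a"
            using w(1,2) unfolding merge_def v_def F_def actvecs_def PiE_def extensional_def
            by auto
        qed
        have "restrict w (cAg G - A) \<in> actvecs G (cAg G - A)"
          using w(1) unfolding actvecs_def by auto
        moreover have "\<rho> (Suc m) = Inl (cdelta G (\<pi> n) w)"
          using 2 r2[of "Suc n"] w(3) by simp
        ultimately show ?thesis using 2 r1[of n] mw unfolding v_def by (auto intro!: bexI[of _ "restrict w (cAg G - A)"])
      qed
    qed
    then have "W (\<lambda>n. projl (\<rho> (2*n)))" using W by blast
    moreover have "(\<lambda>n. projl (\<rho> (2*n))) = \<pi>" using r2 by simp
    ultimately show ?thesis by simp
  qed
  then show ?thesis using Fs by blast
qed

lemma transfer:
  assumes wf: "cgs_wf G" and AAg: "A \<subseteq> cAg G" and s: "s \<in> cSt G"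
    and cond: "\<And>\<rho>. (\<And>n. \<exists>q. \<rho> (2*n) = Inl q) \<Longrightarrow> (\<And>n. \<exists>x. \<rho> (Suc (2*n)) = Inr x) \<Longrightarrow>
       \<rho> \<in> Win \<longleftrightarrow> W (\<lambda>n. projl (\<rho> (2*n)))"
  shows "p1wins G A Win s \<longleftrightarrow> (\<exists>F. strats G A F \<and> (\<forall>\<pi>\<in>out G s A F. W \<pi>))"
proof -
  have "(\<forall>\<rho>\<in>outcomes G A s f. \<rho> \<in> Win) \<longleftrightarrow> (\<forall>\<rho>\<in>outcomes G A s f. W (\<lambda>n. projl (\<rho> (2*n))))"
    if f: "p1strat G A f" for f
  proof -
    have "\<rho> \<in> Win \<longleftrightarrow> W (\<lambda>n. projl (\<rho> (2*n)))" if \<rho>: "\<rho> \<in> outcomes G A s f" for \<rho>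
    proof (rule cond)
      fix n show "\<exists>q. \<rho> (2*n) = Inl q" using outc_struct[OF wf AAg s f \<rho>, of n] by (elim bexE conjE) (rule exI)
    next
      fix n show "\<exists>x. \<rho> (Suc (2*n)) = Inr x" using outc_struct[OF wf AAg s f \<rho>, of n] by (elim bexE conjE) (rule exI)
    qed
    then show ?thesis by (rule ball_cong[OF refl])
  qed
  note eqv = this
  show ?thesis
  proof
    assume "p1wins G A Win s"
    then obtain f where f: "p1strat G A f" "\<forall>\<rho>\<in>outcomes G A s f. \<rho> \<in> Win"
      unfolding p1wins_def by blast
    then have "\<forall>\<rho>\<in>outcomes G A s f. W (\<lambda>n. projl (\<rho> (2*n)))" using eqv[OF f(1)] by simp
    then show "\<exists>F. strats G A F \<and> (\<forall>\<pi>\<in>out G s A F. W \<pi>)" by (rule dir2[OF f(1)])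
  next
    assume "\<exists>F. strats G A F \<and> (\<forall>\<pi>\<in>out G s A F. W \<pi>)"
    then obtain F where F: "strats G A F" "\<forall>\<pi>\<in>out G s A F. W \<pi>" by blast
    obtain f where f: "p1strat G A f" "\<forall>\<rho>\<in>outcomes G A s f. W (\<lambda>n. projl (\<rho> (2*n)))"
      using dir1[OF wf AAg s F] by blast
    then have "\<forall>\<rho>\<in>outcomes G A s f. \<rho> \<in> Win" using eqv[OF f(1)] by simp
    then show "p1wins G A Win s" using f(1) unfolding p1wins_def by blast
  qed
qed

lemma win_conds:
  assumes ev: "\<And>n. \<exists>q. \<rho> (2*n) = Inl q" and od: "\<And>n. \<exists>x. \<rho> (Suc (2*n)) = Inr x"
  shows "\<rho> \<in> NextW X \<longleftrightarrow> projl (\<rho> (2*1)) \<in> X"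
    and "\<rho> \<in> ReachW X \<longleftrightarrow> (\<exists>i. projl (\<rho> (2*i)) \<in> X)"
    and "\<rho> \<in> SafetyW X \<longleftrightarrow> (\<forall>i. projl (\<rho> (2*i)) \<in> X)"
    and "\<rho> \<in> BuchiW X \<longleftrightarrow> (\<forall>i. \<exists>j\<ge>i. projl (\<rho> (2*j)) \<in> X)"
    and "\<rho> \<in> coBuchiW X \<longleftrightarrow> (\<exists>i. \<forall>j\<ge>i. projl (\<rho> (2*j)) \<in> X)"
proof -
  have E: "\<rho> (2*i) \<in> Inl ` X \<longleftrightarrow> projl (\<rho> (2*i)) \<in> X" for i
    using ev[of i] by auto
  have E2: "even n \<and> \<rho> n \<in> Inl ` X \<longleftrightarrow> (\<exists>i. n = 2*i \<and> projl (\<rho> (2*i)) \<in> X)" for n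
  proof
    assume "even n \<and> \<rho> n \<in> Inl ` X"
    then obtain i where "n = 2*i" "\<rho> (2*i) \<in> Inl ` X" by (auto elim!: evenE)
    then show "\<exists>i. n = 2*i \<and> projl (\<rho> (2*i)) \<in> X" using E by blast
  next
    assume "\<exists>i. n = 2*i \<and> projl (\<rho> (2*i)) \<in> X"
    then obtain i where "n = 2*i" "projl (\<rho> (2*i)) \<in> X" by blast
    then show "even n \<and> \<rho> n \<in> Inl ` X" using E by simp
  qed
  show "\<rho> \<in> NextW X \<longleftrightarrow> projl (\<rho> (2*1)) \<in> X" using E[of 1] unfolding NextW_def by simp
  show "\<rho> \<in> ReachW X \<longleftrightarrow> (\<exists>i. projl (\<rho> (2*i)) \<in> X)"
    unfolding ReachW_def mem_Collect_eq E2 by blast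
  show "\<rho> \<in> SafetyW X \<longleftrightarrow> (\<forall>i. projl (\<rho> (2*i)) \<in> X)"
  proof
    assume a: "\<rho> \<in> SafetyW X"
    show "\<forall>i. projl (\<rho> (2*i)) \<in> X"
    proof
      fix i have "\<rho> (2*i) \<in> Inl ` X" using a unfolding SafetyW_def by simp
      then show "projl (\<rho> (2*i)) \<in> X" using E by simp
    qed
  next
    assume a: "\<forall>i. projl (\<rho> (2*i)) \<in> X"
    show "\<rho> \<in> SafetyW X" unfolding SafetyW_def
    proof (safe)
      fix n :: nat assume "even n"
      then obtain i where "n = 2*i" by (rule evenE)
      then show "\<rho> n \<in> Inl ` X" using a E by simp
    qed
  qed
  show "\<rho> \<in> BuchiW X \<longleftrightarrow> (\<forall>i. \<exists>j\<ge>i. projl (\<rho> (2*j)) \<in> X)"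
  proof
    assume a: "\<rho> \<in> BuchiW X"
    show "\<forall>i. \<exists>j\<ge>i. projl (\<rho> (2*j)) \<in> X"
    proof
      fix i
      obtain n where "n \<ge> 2*i" "even n" "\<rho> n \<in> Inl ` X" using a unfolding BuchiW_def by blast
      then obtain j where "n = 2*j" "projl (\<rho> (2*j)) \<in> X" using E2 by blast
      then show "\<exists>j\<ge>i. projl (\<rho> (2*j)) \<in> X" using \<open>n \<ge> 2*i\<close> by (intro exI[of _ j]) auto
    qed
  next
    assume a: "\<forall>i. \<exists>j\<ge>i. projl (\<rho> (2*j)) \<in> X"
    show "\<rho> \<in> BuchiW X" unfolding BuchiW_def
    proof (safe)
      fix N
      obtain j where "j \<ge> N" "projl (\<rho> (2*j)) \<in> X" using a by blast
      then show "\<exists>n\<ge>N. even n \<and> \<rho> n \<in> Inl ` X" using E by (intro exI[of _ "2*j"]) auto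
    qed
  qed
  show "\<rho> \<in> coBuchiW X \<longleftrightarrow> (\<exists>i. \<forall>j\<ge>i. projl (\<rho> (2*j)) \<in> X)"
  proof
    assume "\<rho> \<in> coBuchiW X"
    then obtain N where N: "\<forall>n\<ge>N. even n \<longrightarrow> \<rho> n \<in> Inl ` X" unfolding coBuchiW_def by blast
    have "\<forall>j\<ge>N. projl (\<rho> (2*j)) \<in> X"
    proof (intro allI impI)
      fix j :: nat assume "j \<ge> N"
      then have "2*j \<ge> N" by simp
      then have "\<rho> (2*j) \<in> Inl ` X" using N by simp
      then show "projl (\<rho> (2*j)) \<in> X" using E by simp
    qed
    then show "\<exists>i. \<forall>j\<ge>i. projl (\<rho> (2*j)) \<in> X" by blast
  next
    assume "\<exists>i. \<forall>j\<ge>i. projl (\<rho> (2*j)) \<in> X"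
    then obtain i where i: "\<forall>j\<ge>i. projl (\<rho> (2*j)) \<in> X" by blast
    have "\<forall>n\<ge>2*i. even n \<longrightarrow> \<rho> n \<in> Inl ` X"
    proof (intro allI impI)
      fix n assume "n \<ge> 2*i" "even n"
      then obtain j where "n = 2*j" "j \<ge> i" by (auto elim!: evenE)
      then show "\<rho> n \<in> Inl ` X" using i E by auto
    qed
    then show "\<rho> \<in> coBuchiW X" unfolding coBuchiW_def by blast
  qed
qed

lemma out_Sat:
  assumes "cgs_wf G" "s \<in> cSt G" "\<pi> \<in> out G s A F"
  shows "\<pi> i \<in> Sat G \<phi> u \<longleftrightarrow> u \<le> Vs G (\<pi> i) \<phi>"
  using out_St[OF assms] unfolding Sat_def by simp

lemma ex_cong:
  assumes "\<And>F \<pi>. strats G A F \<Longrightarrow> \<pi> \<in> out G s A F \<Longrightarrow> P \<pi> \<longleftrightarrow> Q \<pi>"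
  shows "(\<exists>F. strats G A F \<and> (\<forall>\<pi>\<in>out G s A F. P \<pi>)) \<longleftrightarrow> (\<exists>F. strats G A F \<and> (\<forall>\<pi>\<in>out G s A F. Q \<pi>))"
  using assms by blast

theorem mainTheorem4:
  fixes G :: "('s, 'ag, 'ac, 'p) cgs"
    and A :: "'ag set" and \<phi> :: "('p, 'ag) sform" and s :: 's and t :: b4
  assumes "cgs_wf G"
    and "A \<subseteq> cAg G"
    and "sf_wf (cAg G) \<phi>"
    and "s \<in> cSt G"
  shows "(Vs G s (Ex A (Nxt \<phi>)) \<ge> t \<longleftrightarrow> p1wins G A (NextW (Sat G \<phi> t)) s)
       \<and> (Vs G s (Ex A (Ev \<phi>)) \<ge> t \<longleftrightarrow> p1wins G A (ReachW (Sat G \<phi> t)) s)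
       \<and> (Vs G s (Ex A (Alw \<phi>)) \<ge> B1111 \<longleftrightarrow> p1wins G A (SafetyW (Sat G \<phi> B1111)) s)
       \<and> (Vs G s (Ex A (Alw \<phi>)) \<ge> B0111 \<longleftrightarrow> p1wins G A (coBuchiW (Sat G \<phi> B0111)) s)
       \<and> (Vs G s (Ex A (Alw \<phi>)) \<ge> B0011 \<longleftrightarrow> p1wins G A (BuchiW (Sat G \<phi> B0011)) s)
       \<and> (Vs G s (Ex A (Alw \<phi>)) \<ge> B0001 \<longleftrightarrow> p1wins G A (ReachW (Sat G \<phi> B0001)) s)
       \<and> (Vs G s (All A (Nxt \<phi>)) \<ge> t \<longleftrightarrow>
            \<not> p1wins G A (NextW (cSt G - Sat G \<phi> t)) s)"
proof -
  note wf = assms(1) and AAg = assms(2) and s = assms(4)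
  note tr = transfer[OF wf AAg s]
  have a: "p1wins G A (NextW (Sat G \<phi> t)) s \<longleftrightarrow> (\<exists>F. strats G A F \<and> (\<forall>\<pi>\<in>out G s A F. \<pi> 1 \<in> Sat G \<phi> t))"
    by (rule tr) (simp add: win_conds)
  have b: "p1wins G A (ReachW (Sat G \<phi> t)) s \<longleftrightarrow> (\<exists>F. strats G A F \<and> (\<forall>\<pi>\<in>out G s A F. \<exists>i. \<pi> i \<in> Sat G \<phi> t))"
    by (rule tr) (simp add: win_conds)
  have c: "p1wins G A (SafetyW (Sat G \<phi> B1111)) s \<longleftrightarrow> (\<exists>F. strats G A F \<and> (\<forall>\<pi>\<in>out G s A F. \<forall>i. \<pi> i \<in> Sat G \<phi> B1111))"
    by (rule tr) (simp add: win_conds)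
  have d: "p1wins G A (coBuchiW (Sat G \<phi> B0111)) s \<longleftrightarrow> (\<exists>F. strats G A F \<and> (\<forall>\<pi>\<in>out G s A F. \<exists>i. \<forall>j\<ge>i. \<pi> j \<in> Sat G \<phi> B0111))"
    by (rule tr) (simp add: win_conds)
  have e: "p1wins G A (BuchiW (Sat G \<phi> B0011)) s \<longleftrightarrow> (\<exists>F. strats G A F \<and> (\<forall>\<pi>\<in>out G s A F. \<forall>i. \<exists>j\<ge>i. \<pi> j \<in> Sat G \<phi> B0011))"
    by (rule tr) (simp add: win_conds)
  have f: "p1wins G A (ReachW (Sat G \<phi> B0001)) s \<longleftrightarrow> (\<exists>F. strats G A F \<and> (\<forall>\<pi>\<in>out G s A F. \<exists>i. \<pi> i \<in> Sat G \<phi> B0001))"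
    by (rule tr) (simp add: win_conds)
  have g: "p1wins G A (NextW (cSt G - Sat G \<phi> t)) s \<longleftrightarrow> (\<exists>F. strats G A F \<and> (\<forall>\<pi>\<in>out G s A F. \<pi> 1 \<in> cSt G - Sat G \<phi> t))"
    by (rule tr) (simp add: win_conds)
  note OS = out_Sat[OF wf s]
  show ?thesis
  proof (intro conjI)
    show "(Vs G s (Ex A (Nxt \<phi>)) \<ge> t \<longleftrightarrow> p1wins G A (NextW (Sat G \<phi> t)) s)"
      unfolding a Vs_Ex[OF wf] Vp_Nxt by (rule ex_cong) (simp add: OS)
    show "(Vs G s (Ex A (Ev \<phi>)) \<ge> t \<longleftrightarrow> p1wins G A (ReachW (Sat G \<phi> t)) s)"
      unfolding b Vs_Ex[OF wf] Vp_Ev by (rule ex_cong) (simp add: OS)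
    show "(Vs G s (Ex A (Alw \<phi>)) \<ge> B1111 \<longleftrightarrow> p1wins G A (SafetyW (Sat G \<phi> B1111)) s)"
      unfolding c Vs_Ex[OF wf] Vp_Alw by (rule ex_cong) (simp add: OS)
    show "(Vs G s (Ex A (Alw \<phi>)) \<ge> B0111 \<longleftrightarrow> p1wins G A (coBuchiW (Sat G \<phi> B0111)) s)"
      unfolding d Vs_Ex[OF wf] Vp_Alw by (rule ex_cong) (simp add: OS)
    show "(Vs G s (Ex A (Alw \<phi>)) \<ge> B0011 \<longleftrightarrow> p1wins G A (BuchiW (Sat G \<phi> B0011)) s)"
      unfolding e Vs_Ex[OF wf] Vp_Alw by (rule ex_cong) (simp add: OS)
    show "(Vs G s (Ex A (Alw \<phi>)) \<ge> B0001 \<longleftrightarrow> p1wins G A (ReachW (Sat G \<phi> B0001)) s)"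
      unfolding f Vs_Ex[OF wf] Vp_Alw by (rule ex_cong) (simp add: OS)
    have "(\<exists>F. strats G A F \<and> (\<forall>\<pi>\<in>out G s A F. \<pi> 1 \<in> cSt G - Sat G \<phi> t)) \<longleftrightarrow>
          (\<exists>F. strats G A F \<and> (\<forall>\<pi>\<in>out G s A F. \<not> t \<le> Vs G (\<pi> 1) \<phi>))"
      by (rule ex_cong) (simp add: OS out_St[OF wf s])
    then show "(Vs G s (All A (Nxt \<phi>)) \<ge> t \<longleftrightarrow> \<not> p1wins G A (NextW (cSt G - Sat G \<phi> t)) s)"
      unfolding g Vs_All[OF wf AAg s] Vp_Nxt by blast
  qed
qed

end
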